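(* Let $(X,d)$ be an ultrametric space and $f:X\to X$ continuous. If any one of the following holds, then $f$ has the finite shadowing property: (i) $f$ is eventually $1$-Lipschitz; (ii) $f$ is invertible and $f^{-1}$ is eventually $1$-Lipschitz; (iii) $f$ is an invertible eventual similarity and $f^{-1}$ is uniformly continuous.
   Context: An ultrametric space satisfies $d(x,z)\le\max\{d(x,y),d(y,z)\}$. A map $g$ is eventually $1$-Lipschitz if there is $\varepsilon>0$ with $d(g(x),g(y))\le d(x,y)$ whenever $d(x,y)<\varepsilon$. $f$ is an eventual similarity if there are $\varepsilon>0$, $s>0$ with $d(f(x),f(y))=s\,d(x,y)$ whenever $d(x,y)<\varepsilon$. Finite shadowing property: for every $\varepsilon>0$ there is $\delta>0$ such that every finite sequence $(x_i)_{i=0}^k$ with $d(f(x_i),x_{i+1})<\delta$ for $0\le i<k$ admits $z$ with $d(f^i(z),x_i)<\varepsilon$ for $0\le i\le k$. *)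

theory Defs
  imports "HOL-Analysis.Analysis"
begin

definition ultrametric_space :: "'a::metric_space itself \<Rightarrow> bool" where
  "ultrametric_space TYPE('a) \<longleftrightarrow>
     (\<forall>x y z :: 'a. dist x z \<le> max (dist x y) (dist y z))"

definition eventually_1_lipschitz :: "('a::metric_space \<Rightarrow> 'b::metric_space) \<Rightarrow> bool" where
  "eventually_1_lipschitz g \<longleftrightarrow>
     (\<exists>\<epsilon>>0. \<forall>x y. dist x y < \<epsilon> \<longrightarrow> dist (g x) (g y) \<le> dist x y)"

definition eventual_similarity :: "('a::metric_space \<Rightarrow> 'b::metric_space) \<Rightarrow> bool" where
  "eventual_similarity f \<longleftrightarrow>
     (\<exists>\<epsilon>>0. \<exists>s>0. \<forall>x y. dist x y < \<epsilon> \<longrightarrow> dist (f x) (f y) = s * dist x y)"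

definition finite_shadowing :: "('a::metric_space \<Rightarrow> 'a) \<Rightarrow> bool" where
  "finite_shadowing f \<longleftrightarrow>
     (\<forall>\<epsilon>>0. \<exists>\<delta>>0. \<forall>(k::nat) (x::nat \<Rightarrow> 'a).
        (\<forall>i<k. dist (f (x i)) (x (Suc i)) < \<delta>) \<longrightarrow>
        (\<exists>z. \<forall>i\<le>k. dist ((f ^^ i) z) (x i) < \<epsilon>))"

end

theory Submission
  imports Defs
begin

lemma um: assumes "ultrametric_space TYPE('a::metric_space)"
  shows "dist (x::'a) z \<le> max (dist x y) (dist y z)"
  using assms unfolding ultrametric_space_def by blast

lemma caseA:
  fixes f :: "'a::metric_space \<Rightarrow> 'a"
  assumes U: "ultrametric_space TYPE('a)" and L: "eventually_1_lipschitz f"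
  shows "finite_shadowing f"
  unfolding finite_shadowing_def
proof (intro allI impI)
  fix \<epsilon> :: real assume "\<epsilon> > 0"
  obtain \<eta> where e: "\<eta> > 0" and eL: "\<And>x y. dist x y < \<eta> \<Longrightarrow> dist (f x) (f y) \<le> dist x y"
    using L unfolding eventually_1_lipschitz_def by blast
  define \<delta> where "\<delta> = min \<epsilon> \<eta>"
  have "\<delta> > 0" using e \<open>\<epsilon> > 0\<close> by (simp add: \<delta>_def)
  moreover have "\<forall>(k::nat) (x::nat \<Rightarrow> 'a).
        (\<forall>i<k. dist (f (x i)) (x (Suc i)) < \<delta>) \<longrightarrow>
        (\<exists>z. \<forall>i\<le>k. dist ((f ^^ i) z) (x i) < \<epsilon>)"
  proof (intro allI impI)
    fix k and x :: "nat \<Rightarrow> 'a"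
    assume H: "\<forall>i<k. dist (f (x i)) (x (Suc i)) < \<delta>"
    have "i \<le> k \<Longrightarrow> dist ((f ^^ i) (x 0)) (x i) < \<delta>" for i
    proof (induction i)
      case 0 then show ?case using \<open>\<delta> > 0\<close> by simp
    next
      case (Suc i)
      then have a: "dist ((f ^^ i) (x 0)) (x i) < \<delta>" by simp
      have b: "dist (f (x i)) (x (Suc i)) < \<delta>" using H Suc.prems by simp
      have c: "dist (f ((f ^^ i) (x 0))) (f (x i)) < \<delta>"
        using eL[of "(f ^^ i) (x 0)" "x i"] a by (simp add: \<delta>_def)
      show ?case using um[OF U, of "f ((f ^^ i) (x 0))" "x (Suc i)" "f (x i)"] b c by simp
    qed
    then show "\<exists>z. \<forall>i\<le>k. dist ((f ^^ i) z) (x i) < \<epsilon>"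
      by (metis \<delta>_def min.strict_boundedE)
  qed
  ultimately show "\<exists>\<delta>>0. \<forall>(k::nat) (x::nat \<Rightarrow> 'a).
        (\<forall>i<k. dist (f (x i)) (x (Suc i)) < \<delta>) \<longrightarrow>
        (\<exists>z. \<forall>i\<le>k. dist ((f ^^ i) z) (x i) < \<epsilon>)" by blast
qed

lemma funpow_cancel:
  assumes "\<And>y. f (g y) = y"
  shows "(f ^^ i) ((g ^^ (i + m)) y) = (g ^^ m) y"
proof (induction i)
  case 0 then show ?case by simp
next
  case (Suc i)
  have "(f ^^ Suc i) ((g ^^ (Suc i + m)) y) = (f ^^ i) (f (g ((g ^^ (i + m)) y)))"
    by (metis add_Suc funpow.simps(2) funpow_Suc_right o_apply)
  then show ?case using Suc assms by simp
qed

lemma caseB: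
  fixes f :: "'a::metric_space \<Rightarrow> 'a"
  assumes U: "ultrametric_space TYPE('a)" and B: "bij f" and L: "eventually_1_lipschitz (inv f)"
  shows "finite_shadowing f"
  unfolding finite_shadowing_def
proof (intro allI impI)
  fix \<epsilon> :: real assume "\<epsilon> > 0"
  define g where "g = inv f"
  have fg: "f (g y) = y" for y using B by (simp add: g_def bij_is_surj surj_f_inv_f)
  have gf: "g (f y) = y" for y using B by (simp add: g_def bij_is_inj inv_f_f)
  obtain \<eta> where e: "\<eta> > 0" and eL: "\<And>x y. dist x y < \<eta> \<Longrightarrow> dist (g x) (g y) \<le> dist x y"
    using L unfolding eventually_1_lipschitz_def g_def by blast
  define \<delta> where "\<delta> = min \<epsilon> \<eta>"
  have "\<delta> > 0" using e \<open>\<epsilon> > 0\<close> by (simp add: \<delta>_def)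
  moreover have "\<forall>(k::nat) (x::nat \<Rightarrow> 'a).
        (\<forall>i<k. dist (f (x i)) (x (Suc i)) < \<delta>) \<longrightarrow>
        (\<exists>z. \<forall>i\<le>k. dist ((f ^^ i) z) (x i) < \<epsilon>)"
  proof (intro allI impI)
    fix k and x :: "nat \<Rightarrow> 'a"
    assume H: "\<forall>i<k. dist (f (x i)) (x (Suc i)) < \<delta>"
    have J: "j \<le> k \<Longrightarrow> dist ((g ^^ j) (x k)) (x (k - j)) < \<delta>" for j
    proof (induction j)
      case 0 then show ?case using \<open>\<delta> > 0\<close> by simp
    next
      case (Suc j)
      define i where "i = k - Suc j"
      have ki: "k - j = Suc i" using Suc.prems by (simp add: i_def)
      have a: "dist ((g ^^ j) (x k)) (x (Suc i)) < \<delta>" using Suc ki by simp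
      have b: "dist (f (x i)) (x (Suc i)) < \<delta>" using H Suc.prems by (simp add: i_def)
      have c: "dist ((g ^^ j) (x k)) (f (x i)) < \<delta>"
        using um[OF U, of "(g ^^ j) (x k)" "f (x i)" "x (Suc i)"] a b by (simp add: dist_commute)
      have "dist (g ((g ^^ j) (x k))) (g (f (x i))) < \<delta>"
        using eL[of "(g ^^ j) (x k)" "f (x i)"] c by (simp add: \<delta>_def)
      then show ?case by (simp add: gf i_def)
    qed
    have "i \<le> k \<Longrightarrow> dist ((f ^^ i) ((g ^^ k) (x k))) (x i) < \<delta>" for i
      using J[of "k - i"] funpow_cancel[of f g, OF fg, of i "k - i" "x k"] by simp
    then show "\<exists>z. \<forall>i\<le>k. dist ((f ^^ i) z) (x i) < \<epsilon>"
      by (metis \<delta>_def min.strict_boundedE)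
  qed
  ultimately show "\<exists>\<delta>>0. \<forall>(k::nat) (x::nat \<Rightarrow> 'a).
        (\<forall>i<k. dist (f (x i)) (x (Suc i)) < \<delta>) \<longrightarrow>
        (\<exists>z. \<forall>i\<le>k. dist ((f ^^ i) z) (x i) < \<epsilon>)" by blast
qed

theorem theorem5p2:
  fixes f :: "'a::metric_space \<Rightarrow> 'a"
  assumes "ultrametric_space TYPE('a)"
    and "continuous_on UNIV f"
    and "eventually_1_lipschitz f
         \<or> (bij f \<and> eventually_1_lipschitz (inv f))
         \<or> (bij f \<and> eventual_similarity f \<and> uniformly_continuous_on UNIV (inv f))"
  shows "finite_shadowing f"
proof -
  consider (A) "eventually_1_lipschitz f" | (B) "bij f \<and> eventually_1_lipschitz (inv f)"
    | (C) "bij f" "eventual_similarity f" "uniformly_continuous_on UNIV (inv f)"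
    using assms(3) by blast
  then show ?thesis
  proof cases
    case A then show ?thesis using caseA assms(1) by blast
  next
    case B then show ?thesis using caseB assms(1) by blast
  next
    case C
    obtain e0 s where e0: "e0 > 0" "s > 0" and S: "\<And>x y. dist x y < e0 \<Longrightarrow> dist (f x) (f y) = s * dist x y"
      using C(2) unfolding eventual_similarity_def by blast
    show ?thesis
    proof (cases "s \<le> 1")
      case True
      have "eventually_1_lipschitz f" unfolding eventually_1_lipschitz_def
      proof (intro exI[of _ e0] conjI allI impI)
        fix x y :: 'a assume "dist x y < e0"
        then have "dist (f x) (f y) = s * dist x y" by (rule S)
        also have "\<dots> \<le> dist x y" using mult_right_mono[OF True, of "dist x y"] by simp
        finally show "dist (f x) (f y) \<le> dist x y" .
      qed (fact e0)
      then show ?thesis using caseA assms(1) by blast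
    next
      case False
      define g where "g = inv f"
      have fg: "f (g y) = y" for y using C(1) by (simp add: g_def bij_is_surj surj_f_inv_f)
      obtain d where d: "d > 0" and dU: "\<And>x y. dist x y < d \<Longrightarrow> dist (g x) (g y) < e0"
        using C(3) e0(1) unfolding uniformly_continuous_on_def g_def by (metis UNIV_I dist_commute)
      have "eventually_1_lipschitz g" unfolding eventually_1_lipschitz_def
      proof (intro exI[of _ d] conjI allI impI)
        fix x y :: 'a assume "dist x y < d"
        then have "dist (f (g x)) (f (g y)) = s * dist (g x) (g y)" using S dU by blast
        then have "dist x y = s * dist (g x) (g y)" by (simp add: fg)
        moreover have "s * dist (g x) (g y) \<ge> dist (g x) (g y)" using False
          by (simp add: mult_le_cancel_right1)
        ultimately show "dist (g x) (g y) \<le> dist x y" by simp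
      qed (fact d)
      then show ?thesis using caseB assms(1) C(1) g_def by blast
    qed
  qed
qed

end
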